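(* Fix a test example $z'$ and $\lambda>0$. Assume that $F_S\,\nabla_\theta f(z',\theta_S^* )\neq 0$, that $\mathrm{Var}_{A\sim D_a}[f(z',\theta_A^* )]>0$, and that $\alpha_{z'}\neq 0$, so that all quantities below are well defined and positive where they appear under square roots. If $$\frac{r_{z',\lambda}}{\sqrt{o_{z',\lambda}\, t_{1,z',\lambda}}}>\frac{t_{2,z',\lambda}}{\sqrt{t_{3,z',\lambda}\, t_{1,z',\lambda}}},$$ then $\dot c_p(\lambda;z')>0$.
   Context: Let $n\ge 2$ and let $S=\{z_1,\dots,z_n\}$ be a training set. For parameters $\theta\in\mathbb{R}^p$, let $L(z,\theta)>0$ be a loss that is differentiable in $\theta$. Set $p(z,\theta):=e^{-L(z,\theta)}\in(0,1)$ and define the model output $f(z,\theta):=\ln\frac{p(z,\theta)}{1-p(z,\theta)}$. Let $\theta_S^*\in\mathbb{R}^p$ satisfy $\sum_{i=1}^n\nabla_\theta L(z_i,\theta_S^* )=0$ (for example, a minimizer of $R_S(\theta)=\frac1n\sum_i L(z_i,\theta)$). For every subset $A\subseteq S$, let $\theta_A^*\in\mathbb{R}^p$ be a fixed parameter vector (the model trained on $A$). Fix an integer $1\le a<n$, and let $D_a$ be the uniform distribution over the subsets $A\subseteq S$ of size $a$. Let $J\in\mathbb{R}^{n\times p}$ be the matrix whose $i$-th row is $\nabla_\theta L(z_i,\theta_S^* )^\top$, and let $F_S:=\frac1n J^\top J=\frac1n\sum_i\nabla_\theta L(z_i,\theta_S^* )\nabla_\theta L(z_i,\theta_S^* )^\top$.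 For a test example $z'$ and $\lambda>0$, define the IFFIM attributor $$\tau_\lambda(z',z):=-\nabla_\theta f(z',\theta_S^* )^\top(F_S+\lambda I_p)^{-1}\nabla_\theta L(z,\theta_S^* ).$$ The population Pearson LDS $c_p(\lambda;z')$ is the Pearson correlation, under $A\sim D_a$, between the random variables $f(z',\theta_A^* )$ and $\sum_{z\in A}\tau_\lambda(z',z)$. Write $\dot c_p(\lambda;z'):=\partial c_p(\lambda;z')/\partial\lambda$. Define: - $\alpha_{z'}\in\mathbb{R}^n$ by $\alpha_{z',i}:=\mathbb{E}_{A\sim D_a}[f(z',\theta_A^* )\mid z_i\in A]-\mathbb{E}_{A\sim D_a}[f(z',\theta_A^* )]$; - $g_{z'}:=\frac1n\sum_{i=1}^n\alpha_{z',i}\nabla_\theta L(z_i,\theta_S^* )=\frac1n J^\top\alpha_{z'}$; - $t_{k,z',\lambda}:=\nabla_\theta f(z',\theta_S^* )^\top(F_S+\lambda I_p)^{-k}F_S\nabla_\theta f(z',\theta_S^* )$ for $k\in\mathbb{N}_{\ge1}$; - $r_{z',\lambda}:=-\nabla_\theta f(z',\theta_S^* )^\top(F_S+\lambda I_p)^{-1}g_{z'}$; - $o_{z',\lambda}:=\alpha_{z'}^\top(JJ^\top+n\lambda I_n)^{-1}\alpha_{z'}$. *)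

theory Defs
  imports "HOL-Analysis.Analysis"
begin

definition grad :: "('a::real_inner \<Rightarrow> real) \<Rightarrow> 'a \<Rightarrow> 'a" where
  "grad g x = (THE D. GDERIV g x :> D)"

definition model_out :: "('z \<Rightarrow> 'p \<Rightarrow> real) \<Rightarrow> 'z \<Rightarrow> 'p \<Rightarrow> real" where
  "model_out L z \<theta> = (let p = exp (- L z \<theta>) in ln (p / (1 - p)))"

(* Support of D_a: subsets of the (index set of the) training set of size a *)
definition subsets_a :: "nat \<Rightarrow> 'n::finite set set" where
  "subsets_a a = {A. card A = a}"

definition E_Da :: "nat \<Rightarrow> ('n::finite set \<Rightarrow> real) \<Rightarrow> real" where
  "E_Da a X = (\<Sum>A\<in>subsets_a a. X A) / real (card (subsets_a a :: 'n set set))"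

definition E_Da_cond :: "nat \<Rightarrow> 'n::finite \<Rightarrow> ('n set \<Rightarrow> real) \<Rightarrow> real" where
  "E_Da_cond a i X =
     (\<Sum>A\<in>{A\<in>subsets_a a. i \<in> A}. X A) / real (card {A\<in>subsets_a a. i \<in> A})"

definition Cov_Da :: "nat \<Rightarrow> ('n::finite set \<Rightarrow> real) \<Rightarrow> ('n set \<Rightarrow> real) \<Rightarrow> real" where
  "Cov_Da a X Y = E_Da a (\<lambda>A. (X A - E_Da a X) * (Y A - E_Da a Y))"

definition Var_Da :: "nat \<Rightarrow> ('n::finite set \<Rightarrow> real) \<Rightarrow> real" where
  "Var_Da a X = Cov_Da a X X"

definition pearson_Da :: "nat \<Rightarrow> ('n::finite set \<Rightarrow> real) \<Rightarrow> ('n set \<Rightarrow> real) \<Rightarrow> real" where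
  "pearson_Da a X Y = Cov_Da a X Y / (sqrt (Var_Da a X) * sqrt (Var_Da a Y))"

definition Jac :: "('z \<Rightarrow> real^'p \<Rightarrow> real) \<Rightarrow> ('n \<Rightarrow> 'z) \<Rightarrow> real^'p \<Rightarrow> real^'p^'n" where
  "Jac L zs \<theta>S = (\<chi> i. grad (L (zs i)) \<theta>S)"

definition FS :: "('z \<Rightarrow> real^'p \<Rightarrow> real) \<Rightarrow> ('n::finite \<Rightarrow> 'z) \<Rightarrow> real^'p \<Rightarrow> real^'p^'p" where
  "FS L zs \<theta>S = (1 / real CARD('n)) *\<^sub>R (transpose (Jac L zs \<theta>S) ** Jac L zs \<theta>S)"

definition tau :: "('z \<Rightarrow> real^'p \<Rightarrow> real) \<Rightarrow> ('n::finite \<Rightarrow> 'z) \<Rightarrow> real^'p \<Rightarrow> real \<Rightarrow> 'z \<Rightarrow> 'z \<Rightarrow> real" where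
  "tau L zs \<theta>S lam z' z =
     - (grad (model_out L z') \<theta>S \<bullet>
        (matrix_inv (FS L zs \<theta>S + lam *\<^sub>R mat 1) *v grad (L z) \<theta>S))"

definition cp :: "('z \<Rightarrow> real^'p \<Rightarrow> real) \<Rightarrow> ('n::finite \<Rightarrow> 'z) \<Rightarrow> real^'p \<Rightarrow> ('n set \<Rightarrow> real^'p)
                  \<Rightarrow> nat \<Rightarrow> 'z \<Rightarrow> real \<Rightarrow> real" where
  "cp L zs \<theta>S \<theta>A a z' lam =
     pearson_Da a (\<lambda>A. model_out L z' (\<theta>A A)) (\<lambda>A. \<Sum>i\<in>A. tau L zs \<theta>S lam z' (zs i))"

definition alpha :: "('z \<Rightarrow> real^'p \<Rightarrow> real) \<Rightarrow> ('n::finite set \<Rightarrow> real^'p) \<Rightarrow> nat \<Rightarrow> 'z \<Rightarrow> real^'n" where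
  "alpha L \<theta>A a z' = (\<chi> i. E_Da_cond a i (\<lambda>A. model_out L z' (\<theta>A A))
                           - E_Da a (\<lambda>A. model_out L z' (\<theta>A A)))"

definition gvec :: "('z \<Rightarrow> real^'p \<Rightarrow> real) \<Rightarrow> ('n::finite \<Rightarrow> 'z) \<Rightarrow> real^'p \<Rightarrow> ('n set \<Rightarrow> real^'p)
                    \<Rightarrow> nat \<Rightarrow> 'z \<Rightarrow> real^'p" where
  "gvec L zs \<theta>S \<theta>A a z' = (1 / real CARD('n)) *\<^sub>R (transpose (Jac L zs \<theta>S) *v alpha L \<theta>A a z')"

definition tk :: "('z \<Rightarrow> real^'p \<Rightarrow> real) \<Rightarrow> ('n::finite \<Rightarrow> 'z) \<Rightarrow> real^'p \<Rightarrow> nat \<Rightarrow> 'z \<Rightarrow> real \<Rightarrow> real" where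
  "tk L zs \<theta>S k z' lam =
     (let v = grad (model_out L z') \<theta>S;
          Minv = matrix_inv (FS L zs \<theta>S + lam *\<^sub>R mat 1)
      in v \<bullet> (((\<lambda>x. Minv *v x) ^^ k) (FS L zs \<theta>S *v v)))"

definition r_val :: "('z \<Rightarrow> real^'p \<Rightarrow> real) \<Rightarrow> ('n::finite \<Rightarrow> 'z) \<Rightarrow> real^'p \<Rightarrow> ('n set \<Rightarrow> real^'p)
                  \<Rightarrow> nat \<Rightarrow> 'z \<Rightarrow> real \<Rightarrow> real" where
  "r_val L zs \<theta>S \<theta>A a z' lam =
     - (grad (model_out L z') \<theta>S \<bullet>
        (matrix_inv (FS L zs \<theta>S + lam *\<^sub>R mat 1) *v gvec L zs \<theta>S \<theta>A a z'))"

definition o_val :: "('z \<Rightarrow> real^'p \<Rightarrow> real) \<Rightarrow> ('n::finite \<Rightarrow> 'z) \<Rightarrow> real^'p \<Rightarrow> ('n set \<Rightarrow> real^'p)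
                  \<Rightarrow> nat \<Rightarrow> 'z \<Rightarrow> real \<Rightarrow> real" where
  "o_val L zs \<theta>S \<theta>A a z' lam =
     alpha L \<theta>A a z' \<bullet>
       (matrix_inv (Jac L zs \<theta>S ** transpose (Jac L zs \<theta>S) + (real CARD('n) * lam) *\<^sub>R mat 1)
          *v alpha L \<theta>A a z')"

end

theory Submission
  imports Defs
begin


lemma adj: "((A::real^'n^'m) *v x) \<bullet> y = x \<bullet> (transpose A *v y)"
  by (metis dot_lmul_matrix inner_commute transpose_matrix_vector)

definition psdm :: "real^'p^'p \<Rightarrow> bool" where
  "psdm F \<longleftrightarrow> transpose F = F \<and> (\<forall>x. 0 \<le> x \<bullet> (F *v x))"

lemma psdm_sym: "psdm F \<Longrightarrow> (F *v x) \<bullet> y = x \<bullet> (F *v y)"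
  unfolding psdm_def using adj[of F x y] by simp

lemma smat_apply[simp]: "(\<mu> *\<^sub>R mat 1 :: real^'p^'p) *v x = \<mu> *\<^sub>R x"
  by (simp add: vec_eq_iff matrix_vector_mult_def mat_def if_distrib if_distribR sum.delta cong: if_cong)

lemma M_apply: "((F::real^'p^'p) + \<mu> *\<^sub>R mat 1) *v x = F *v x + \<mu> *\<^sub>R x"
proof -
  have "(\<mu> *\<^sub>R mat 1 :: real^'p^'p) *v x = \<mu> *\<^sub>R x"
    by (simp add: vec_eq_iff matrix_vector_mult_def mat_def if_distrib if_distribR sum.delta cong: if_cong)
  then show ?thesis by (simp add: matrix_vector_mult_add_rdistrib)
qed

lemma M_quad: "psdm F \<Longrightarrow> x \<bullet> ((F + \<mu> *\<^sub>R mat 1) *v x) \<ge> \<mu> * (x \<bullet> x)"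
  unfolding M_apply psdm_def by (simp add: inner_add_right)

lemma M_norm: assumes "psdm F" "0 < \<mu>"
  shows "\<mu> * norm x \<le> norm ((F + \<mu> *\<^sub>R mat 1) *v x)"
proof -
  have "\<mu> * (norm x * norm x) \<le> norm x * norm ((F + \<mu> *\<^sub>R mat 1) *v x)"
    using M_quad[OF assms(1), where x=x and \<mu>=\<mu>] norm_cauchy_schwarz[of x "(F + \<mu> *\<^sub>R mat 1) *v x"]
    by (simp add: dot_square_norm power2_eq_square)
  then show ?thesis
    by (cases "x = 0") (auto simp: mult.commute mult.left_commute)
qed

lemma M_invertible: assumes "psdm F" "0 < \<mu>"
  shows "invertible (F + \<mu> *\<^sub>R mat 1)"
proof -
  have "\<forall>x. (F + \<mu> *\<^sub>R mat 1) *v x = 0 \<longrightarrow> x = 0"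
  proof (intro allI impI)
    fix x assume "(F + \<mu> *\<^sub>R mat 1) *v x = 0"
    then have "\<mu> * norm x \<le> 0" using M_norm[OF assms, of x] by simp
    then show "x = 0" using assms(2) by (simp add: mult_le_0_iff)
  qed
  then show ?thesis using matrix_left_invertible_ker invertible_left_inverse by blast
qed

definition Rm :: "real^'p^'p \<Rightarrow> real \<Rightarrow> real^'p^'p" where
  "Rm F \<mu> = matrix_inv (F + \<mu> *\<^sub>R mat 1)"

lemma Rm_inv: assumes "psdm F" "0 < \<mu>"
  shows "(F + \<mu> *\<^sub>R mat 1) ** Rm F \<mu> = mat 1 \<and> Rm F \<mu> ** (F + \<mu> *\<^sub>R mat 1) = mat 1"
  using M_invertible[OF assms] unfolding Rm_def matrix_inv_def invertible_def
  by (rule someI_ex)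

lemma MR: "psdm F \<Longrightarrow> 0 < \<mu> \<Longrightarrow> (F + \<mu> *\<^sub>R mat 1) *v (Rm F \<mu> *v y) = y"
  using Rm_inv by (metis matrix_vector_mul_assoc matrix_vector_mul_lid)

lemma RM: "psdm F \<Longrightarrow> 0 < \<mu> \<Longrightarrow> Rm F \<mu> *v ((F + \<mu> *\<^sub>R mat 1) *v y) = y"
  using Rm_inv by (metis matrix_vector_mul_assoc matrix_vector_mul_lid)

lemma MR': "psdm F \<Longrightarrow> 0 < \<mu> \<Longrightarrow> F *v (Rm F \<mu> *v y) + \<mu> *\<^sub>R (Rm F \<mu> *v y) = y"
  using MR M_apply by metis

lemma M_sym: "psdm F \<Longrightarrow> ((F + \<mu> *\<^sub>R mat 1) *v x) \<bullet> y = x \<bullet> ((F + \<mu> *\<^sub>R mat 1) *v y)"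
  unfolding M_apply using psdm_sym[of F x y] by (simp add: inner_add_left inner_add_right)

lemma R_sym: assumes "psdm F" "0 < \<mu>"
  shows "(Rm F \<mu> *v x) \<bullet> y = x \<bullet> (Rm F \<mu> *v y)"
proof -
  have "(Rm F \<mu> *v x) \<bullet> y = (Rm F \<mu> *v x) \<bullet> ((F + \<mu> *\<^sub>R mat 1) *v (Rm F \<mu> *v y))"
    using MR[OF assms] by simp
  also have "\<dots> = x \<bullet> (Rm F \<mu> *v y)"
    using M_sym[OF assms(1)] MR[OF assms] by metis
  finally show ?thesis .
qed

lemma FM_comm: "(F::real^'p^'p) *v ((F + \<mu> *\<^sub>R mat 1) *v x) = (F + \<mu> *\<^sub>R mat 1) *v (F *v x)"
  by (simp add: matrix_vector_mult_add_rdistrib matrix_vector_right_distrib matrix_vector_mult_scaleR)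

lemma FR_comm: assumes "psdm F" "0 < \<mu>"
  shows "F *v (Rm F \<mu> *v x) = Rm F \<mu> *v (F *v x)"
  by (metis FM_comm MR RM assms)

lemma R_norm: assumes "psdm F" "0 < \<mu>"
  shows "norm (Rm F \<mu> *v y) \<le> norm y / \<mu>"
  using M_norm[OF assms, of "Rm F \<mu> *v y"] MR[OF assms] assms(2)
  by (simp add: field_simps)

lemma R_zero: assumes "psdm F" "0 < \<mu>" "Rm F \<mu> *v y = 0" shows "y = 0"
  using MR[OF assms(1,2), of y] assms(3) by simp

lemma resolvent: assumes "psdm F" "0 < \<mu>" "0 < l"
  shows "Rm F \<mu> *v y - Rm F l *v y = (l - \<mu>) *\<^sub>R (Rm F \<mu> *v (Rm F l *v y))"
proof -
  let ?z = "Rm F l *v y"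
  have "(F + \<mu> *\<^sub>R mat 1) *v ?z = y + (\<mu> - l) *\<^sub>R ?z"
    using MR'[OF assms(1,3), of y] by (simp add: M_apply algebra_simps)
  then have "?z = Rm F \<mu> *v (y + (\<mu> - l) *\<^sub>R ?z)"
    using RM[OF assms(1,2)] by metis
  then show ?thesis
    by (simp add: matrix_vector_right_distrib matrix_vector_mult_scaleR algebra_simps)
qed

lemma ev_pos: "0 < l \<Longrightarrow> \<forall>\<^sub>F \<mu> in at l. l / 2 < \<mu> \<and> \<mu> \<noteq> (l::real)"
  unfolding eventually_at by (rule exI[of _ "l/2"]) (auto simp: dist_real_def split: abs_split)

lemma R_cont: assumes F: "psdm F" and l: "0 < l"
  shows "((\<lambda>\<mu>. Rm F \<mu> *v d) \<longlongrightarrow> Rm F l *v d) (at l)"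
proof -
  let ?C = "2 * norm (Rm F l *v d) / l"
  have "\<forall>\<^sub>F \<mu> in at l. norm (Rm F \<mu> *v d - Rm F l *v d) \<le> ?C * \<bar>\<mu> - l\<bar>"
    using ev_pos[OF l]
  proof eventually_elim
    case (elim \<mu>)
    then have mu: "0 < \<mu>" "l / 2 < \<mu>" using l by auto
    have "norm (Rm F \<mu> *v d - Rm F l *v d) = \<bar>l - \<mu>\<bar> * norm (Rm F \<mu> *v (Rm F l *v d))"
      using resolvent[OF F mu(1) l] by simp
    also have "\<dots> \<le> \<bar>l - \<mu>\<bar> * (norm (Rm F l *v d) / \<mu>)"
      by (rule mult_left_mono[OF R_norm[OF F mu(1)]]) simp
    also have "\<dots> \<le> \<bar>l - \<mu>\<bar> * (norm (Rm F l *v d) / (l/2))"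
      by (intro mult_left_mono divide_left_mono) (use mu l in auto)
    also have "\<dots> = ?C * \<bar>\<mu> - l\<bar>" by (simp add: field_simps abs_minus_commute)
    finally show ?case .
  qed
  moreover have "((\<lambda>\<mu>. ?C * \<bar>\<mu> - l\<bar>) \<longlongrightarrow> 0) (at l)"
  proof -
    have "((\<lambda>\<mu>. ?C * \<bar>\<mu> - l\<bar>) \<longlongrightarrow> ?C * \<bar>l - l\<bar>) (at l)"
      by (intro tendsto_intros)
    then show ?thesis by simp
  qed
  ultimately have "((\<lambda>\<mu>. Rm F \<mu> *v d - Rm F l *v d) \<longlongrightarrow> 0) (at l)"
    by (rule Lim_null_comparison)
  then show ?thesis by (simp add: LIM_zero_iff)
qed

lemma d_lin: assumes F: "psdm F" and l: "0 < l"
  shows "((\<lambda>\<mu>. a \<bullet> (Rm F \<mu> *v b)) has_field_derivative - (a \<bullet> (Rm F l *v (Rm F l *v b)))) (at l)"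
  unfolding has_field_derivative_iff
proof -
  have "((\<lambda>\<mu>. - (a \<bullet> (Rm F \<mu> *v (Rm F l *v b)))) \<longlongrightarrow> - (a \<bullet> (Rm F l *v (Rm F l *v b)))) (at l)"
    by (intro tendsto_intros R_cont[OF F l])
  moreover have "\<forall>\<^sub>F \<mu> in at l. - (a \<bullet> (Rm F \<mu> *v (Rm F l *v b))) =
      (a \<bullet> (Rm F \<mu> *v b) - a \<bullet> (Rm F l *v b)) / (\<mu> - l)"
    using ev_pos[OF l]
  proof eventually_elim
    case (elim \<mu>)
    then have mu: "0 < \<mu>" "\<mu> \<noteq> l" using l by auto
    have "a \<bullet> (Rm F \<mu> *v b) - a \<bullet> (Rm F l *v b) = (l - \<mu>) * (a \<bullet> (Rm F \<mu> *v (Rm F l *v b)))"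
      using resolvent[OF F mu(1) l, of b] by (metis inner_diff_right inner_scaleR_right)
    then show ?case using mu by (simp add: field_simps)
  qed
  ultimately show "((\<lambda>y. (a \<bullet> (Rm F y *v b) - a \<bullet> (Rm F l *v b)) / (y - l)) \<longlongrightarrow>
      - (a \<bullet> (Rm F l *v (Rm F l *v b)))) (at l)"
    by (rule Lim_transform_eventually)
qed

lemma d_quad: assumes F: "psdm F" and l: "0 < l"
  shows "((\<lambda>\<mu>. (Rm F \<mu> *v a) \<bullet> (Rm F \<mu> *v b)) has_field_derivative
     - ((Rm F l *v (Rm F l *v a)) \<bullet> (Rm F l *v b) + (Rm F l *v a) \<bullet> (Rm F l *v (Rm F l *v b)))) (at l)"
  unfolding has_field_derivative_iff
proof -
  have "((\<lambda>\<mu>. - ((Rm F \<mu> *v (Rm F l *v a)) \<bullet> (Rm F \<mu> *v b) + (Rm F l *v a) \<bullet> (Rm F \<mu> *v (Rm F l *v b))))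
     \<longlongrightarrow> - ((Rm F l *v (Rm F l *v a)) \<bullet> (Rm F l *v b) + (Rm F l *v a) \<bullet> (Rm F l *v (Rm F l *v b)))) (at l)"
    by (intro tendsto_intros R_cont[OF F l])
  moreover have "\<forall>\<^sub>F \<mu> in at l. - ((Rm F \<mu> *v (Rm F l *v a)) \<bullet> (Rm F \<mu> *v b) + (Rm F l *v a) \<bullet> (Rm F \<mu> *v (Rm F l *v b))) =
      ((Rm F \<mu> *v a) \<bullet> (Rm F \<mu> *v b) - (Rm F l *v a) \<bullet> (Rm F l *v b)) / (\<mu> - l)"
    using ev_pos[OF l]
  proof eventually_elim
    case (elim \<mu>)
    then have mu: "0 < \<mu>" "\<mu> \<noteq> l" using l by auto
    have "(Rm F \<mu> *v a) \<bullet> (Rm F \<mu> *v b) - (Rm F l *v a) \<bullet> (Rm F l *v b)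
        = (Rm F \<mu> *v a - Rm F l *v a) \<bullet> (Rm F \<mu> *v b) + (Rm F l *v a) \<bullet> (Rm F \<mu> *v b - Rm F l *v b)"
      by (simp add: inner_diff_left inner_diff_right)
    also have "\<dots> = (l - \<mu>) * ((Rm F \<mu> *v (Rm F l *v a)) \<bullet> (Rm F \<mu> *v b) + (Rm F l *v a) \<bullet> (Rm F \<mu> *v (Rm F l *v b)))"
      unfolding resolvent[OF F mu(1) l] by (simp add: algebra_simps)
    finally show ?case using mu by (simp add: field_simps)
  qed
  ultimately show "((\<lambda>y. ((Rm F y *v a) \<bullet> (Rm F y *v b) - (Rm F l *v a) \<bullet> (Rm F l *v b)) / (y - l)) \<longlongrightarrow>
     - ((Rm F l *v (Rm F l *v a)) \<bullet> (Rm F l *v b) + (Rm F l *v a) \<bullet> (Rm F l *v (Rm F l *v b)))) (at l)"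
    by (rule Lim_transform_eventually)
qed

lemma R_psd: assumes F: "psdm F" and l: "0 < l" shows "0 \<le> x \<bullet> (Rm F l *v x)"
proof -
  have "x \<bullet> (Rm F l *v x) = (Rm F l *v x) \<bullet> ((F + l *\<^sub>R mat 1) *v (Rm F l *v x))"
    using MR[OF F l, of x] by (simp add: inner_commute)
  also have "\<dots> \<ge> l * ((Rm F l *v x) \<bullet> (Rm F l *v x))" by (rule M_quad[OF F])
  finally show ?thesis using l by (meson inner_ge_zero order_trans zero_le_mult_iff less_imp_le)
qed

lemma quad_disc: fixes A B C :: real
  assumes "\<And>t. 0 \<le> A + 2 * t * B + t\<^sup>2 * C" shows "B\<^sup>2 \<le> A * C"
proof -
  have A: "0 \<le> A" using assms[of 0] by simp
  show ?thesis
  proof (cases "C > 0")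
    case True
    have "0 \<le> A + 2 * (- B / C) * B + (- B / C)\<^sup>2 * C" by (rule assms)
    also have "\<dots> = A - B\<^sup>2 / C" using True by (simp add: field_simps power2_eq_square)
    finally show ?thesis using True by (simp add: field_simps)
  next
    case False
    have B: "B = 0"
    proof (rule ccontr)
      assume "B \<noteq> 0"
      have "0 \<le> A + 2 * (- (A + 1) / (2 * B)) * B + (- (A + 1) / (2 * B))\<^sup>2 * C" by (rule assms)
      moreover have "(- (A + 1) / (2 * B))\<^sup>2 * C \<le> 0" using False
        by (simp add: mult_nonneg_nonpos)
      moreover have "A + 2 * (- (A + 1) / (2 * B)) * B = -1" using \<open>B \<noteq> 0\<close> by (simp add: field_simps)
      ultimately show False by linarith
    qed
    have "0 \<le> A * C \<or> True" by simp
    show ?thesis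
    proof (cases "C = 0")
      case True then show ?thesis using B by simp
    next
      case False2: False
      then have "C < 0" using False by simp
      have "0 \<le> A + 2 * t * B + t\<^sup>2 * C" for t by (rule assms)
      have sq: "(sqrt ((A + 1) / (- C)))\<^sup>2 = (A + 1) / (- C)"
        using \<open>C < 0\<close> A by (intro real_sqrt_pow2) (simp add: divide_nonneg_neg)
      from this[symmetric] \<open>\<And>t. 0 \<le> A + 2 * t * B + t\<^sup>2 * C\<close>[of "sqrt ((A + 1) / (- C))"]
      have "0 \<le> A + (A + 1) / (- C) * C" using B by simp
      also have "\<dots> = -1" using \<open>C < 0\<close> by (simp add: field_simps)
      finally show ?thesis by simp
    qed
  qed
qed

lemma CS_form: fixes H :: "real^'n^'n"
  assumes sym: "\<And>x y. (H *v x) \<bullet> y = x \<bullet> (H *v y)" and psd: "\<And>x. 0 \<le> x \<bullet> (H *v x)"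
  shows "(a \<bullet> (H *v b))\<^sup>2 \<le> (a \<bullet> (H *v a)) * (b \<bullet> (H *v b))"
proof (rule quad_disc)
  fix t :: real
  have "0 \<le> (a + t *\<^sub>R b) \<bullet> (H *v (a + t *\<^sub>R b))" by (rule psd)
  also have "\<dots> = a \<bullet> (H *v a) + 2 * t * (a \<bullet> (H *v b)) + t\<^sup>2 * (b \<bullet> (H *v b))"
    using sym[of b a] sym[of a b] by (simp add: matrix_vector_right_distrib matrix_vector_mult_scaleR
        inner_add_left inner_add_right inner_commute[of b "H *v a"] power2_eq_square algebra_simps)
  finally show "0 \<le> a \<bullet> (H *v a) + 2 * t * (a \<bullet> (H *v b)) + t\<^sup>2 * (b \<bullet> (H *v b))" .
qed

lemma pos1: assumes F: "psdm F" and l: "0 < l" and Fy: "F *v y \<noteq> 0"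
  shows "0 < y \<bullet> (Rm F l *v (F *v y))"
proof -
  let ?u = "Rm F l *v y"
  have Fu: "F *v ?u \<noteq> 0" using FR_comm[OF F l] R_zero[OF F l] Fy by metis
  have "y \<bullet> (Rm F l *v (F *v y)) = ((F + l *\<^sub>R mat 1) *v ?u) \<bullet> (F *v ?u)"
    using MR[OF F l, of y] FR_comm[OF F l, of y] by simp
  also have "\<dots> = (F *v ?u) \<bullet> (F *v ?u) + l * (?u \<bullet> (F *v ?u))"
    by (simp add: M_apply inner_add_left)
  also have "\<dots> > 0"
    using Fu l F unfolding psdm_def by (simp add: add_pos_nonneg)
  finally show ?thesis .
qed



definition cc :: "nat \<Rightarrow> nat \<Rightarrow> nat \<Rightarrow> nat" where
  "cc N a k = (if k \<le> a then (N - k) choose (a - k) else 0)"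

lemma card_supsets:
  fixes T :: "'n::finite set"
  shows "card {A::'n set. card A = a \<and> T \<subseteq> A} = cc CARD('n) a (card T)"
proof (cases "card T \<le> a")
  case True
  have eq: "{A::'n set. card A = a \<and> T \<subseteq> A} = (\<lambda>B. B \<union> T) ` {B. B \<subseteq> - T \<and> card B = a - card T}"
  proof (intro set_eqI iffI)
    fix A assume A: "A \<in> {A::'n set. card A = a \<and> T \<subseteq> A}"
    then have "A = (A - T) \<union> T" "A - T \<subseteq> - T" "card (A - T) = a - card T"
      by (auto simp: card_Diff_subset)
    then show "A \<in> (\<lambda>B. B \<union> T) ` {B. B \<subseteq> - T \<and> card B = a - card T}" by blast
  next
    fix A assume "A \<in> (\<lambda>B. B \<union> T) ` {B. B \<subseteq> - T \<and> card B = a - card T}"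
    then obtain B where B: "B \<subseteq> - T" "card B = a - card T" "A = B \<union> T" by auto
    have "B \<inter> T = {}" using B(1) by auto
    then have "card A = card B + card T" using B(3) by (simp add: card_Un_disjoint)
    then show "A \<in> {A::'n set. card A = a \<and> T \<subseteq> A}" using B True by auto
  qed
  have inj: "inj_on (\<lambda>B. B \<union> T) {B. B \<subseteq> - T \<and> card B = a - card T}"
    by (rule inj_onI) blast
  have "card {B. B \<subseteq> - T \<and> card B = a - card T} = card (- T) choose (a - card T)"
    by (rule n_subsets) simp
  moreover have "card (- T) = CARD('n) - card T" by (simp add: Compl_eq_Diff_UNIV card_Diff_subset)
  ultimately show ?thesis using True unfolding eq cc_def by (simp add: card_image[OF inj])
next
  case False
  have "{A::'n set. card A = a \<and> T \<subseteq> A} = {}"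
    using False card_mono[of _ T] by fastforce
  then show ?thesis using False by (simp add: cc_def)
qed

lemma sum_ind: "sum g (A::'n::finite set) = (\<Sum>i\<in>UNIV. if i \<in> A then g i else 0)"
  by (simp add: sum.If_cases)

lemma card_S: "card (subsets_a a :: 'n::finite set set) = cc CARD('n) a 0"
  using card_supsets[where T="{}::'n set" and a=a] by (simp add: subsets_a_def)

lemma card_S1: "card {A\<in>subsets_a a. (i::'n::finite) \<in> A} = cc CARD('n) a 1"
  using card_supsets[where T="{i}" and a=a] by (simp add: subsets_a_def)

lemma card_S2: "card {A\<in>subsets_a a. (i::'n::finite) \<in> A \<and> j \<in> A} = (if i = j then cc CARD('n) a 1 else cc CARD('n) a 2)"
  using card_supsets[where T="{i,j}" and a=a] card_supsets[where T="{i}" and a=a] by (auto simp: subsets_a_def numeral_2_eq_2)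

lemma cc_pos: "1 \<le> a \<Longrightarrow> a < N \<Longrightarrow> cc N a 2 < cc N a 1 \<and> 0 < cc N a 0 \<and> 0 < cc N a 1"
proof -
  assume a: "1 \<le> a" "a < N"
  have c0: "0 < cc N a 0" using a by (simp add: cc_def)
  have c1: "0 < cc N a 1" using a by (simp add: cc_def)
  have "cc N a 2 < cc N a 1"
  proof (cases "2 \<le> a")
    case True
    have e1: "N - 1 = Suc (N - 2)" "a - 1 = Suc (a - 2)" using a True by auto
    have "cc N a 1 = ((N - 2) choose (a - 2)) + ((N - 2) choose (Suc (a - 2)))"
      using True a unfolding cc_def e1 by simp
    moreover have "0 < ((N - 2) choose (Suc (a - 2)))" using a True by simp
    ultimately show ?thesis using True by (simp add: cc_def)
  next
    case False
    then show ?thesis using c1 by (simp add: cc_def)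
  qed
  then show ?thesis using c0 c1 by simp
qed

lemma swapg: "finite (SS :: 'n::finite set set) \<Longrightarrow>
   (\<Sum>A\<in>SS. \<Sum>i\<in>A. h i A) = (\<Sum>i\<in>UNIV. \<Sum>A\<in>{A\<in>SS. i \<in> A}. (h i A :: real))"
proof -
  assume fin: "finite SS"
  have "(\<Sum>A\<in>SS. \<Sum>i\<in>A. h i A) = (\<Sum>A\<in>SS. \<Sum>i\<in>UNIV. if i \<in> A then h i A else 0)"
    by (subst sum_ind) simp
  also have "\<dots> = (\<Sum>i\<in>UNIV. \<Sum>A\<in>SS. if i \<in> A then h i A else 0)" by (rule sum.swap)
  also have "\<dots> = (\<Sum>i\<in>UNIV. \<Sum>A\<in>{A\<in>SS. i \<in> A}. h i A)"
    by (simp add: sum.inter_filter[OF fin])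
  finally show ?thesis .
qed

lemma comb_main:
  fixes X :: "'n::finite set \<Rightarrow> real" and w :: "'n \<Rightarrow> real"
  assumes a: "1 \<le> a" "a < CARD('n)" and w0: "sum w UNIV = 0"
  shows "Cov_Da a X (\<lambda>A. \<Sum>i\<in>A. w i) =
           real (cc CARD('n) a 1) / real (cc CARD('n) a 0) * (\<Sum>i\<in>UNIV. w i * (E_Da_cond a i X - E_Da a X))"
    and "Var_Da a (\<lambda>A. \<Sum>i\<in>A. w i) =
           (real (cc CARD('n) a 1) - real (cc CARD('n) a 2)) / real (cc CARD('n) a 0) * (\<Sum>i\<in>UNIV. (w i)\<^sup>2)"
proof -
  let ?S = "subsets_a a :: 'n set set"
  let ?c0 = "real (cc CARD('n) a 0)" and ?c1 = "real (cc CARD('n) a 1)" and ?c2 = "real (cc CARD('n) a 2)"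
  have pos: "?c2 < ?c1" "0 < ?c0" "0 < ?c1" using cc_pos[OF a] by auto
  have fin: "finite ?S" by simp
  note swap1 = swapg[OF fin]
  have EY: "E_Da a (\<lambda>A. \<Sum>i\<in>A. w i) = 0"
    unfolding E_Da_def swap1 by (simp add: card_S1 sum_distrib_left[symmetric] w0)
  have cond: "(\<Sum>A\<in>{A\<in>?S. i \<in> A}. X A) = ?c1 * E_Da_cond a i X" for i
    unfolding E_Da_cond_def card_S1 using pos by simp
  show "Cov_Da a X (\<lambda>A. \<Sum>i\<in>A. w i) = ?c1 / ?c0 * (\<Sum>i\<in>UNIV. w i * (E_Da_cond a i X - E_Da a X))"
  proof -
    have "Cov_Da a X (\<lambda>A. \<Sum>i\<in>A. w i) = (\<Sum>A\<in>?S. \<Sum>i\<in>A. (X A - E_Da a X) * w i) / ?c0"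
      unfolding Cov_Da_def EY by (simp add: E_Da_def card_S sum_distrib_left)
    also have "\<dots> = (\<Sum>i\<in>UNIV. w i * (\<Sum>A\<in>{A\<in>?S. i \<in> A}. X A - E_Da a X)) / ?c0"
      unfolding swap1 by (simp add: sum_distrib_left mult.commute)
    also have "\<dots> = (\<Sum>i\<in>UNIV. w i * (?c1 * (E_Da_cond a i X - E_Da a X))) / ?c0"
      by (simp add: sum_subtractf cond card_S1 algebra_simps)
    also have "\<dots> = ?c1 / ?c0 * (\<Sum>i\<in>UNIV. w i * (E_Da_cond a i X - E_Da a X))"
      by (simp add: sum_distrib_left sum_divide_distrib algebra_simps)
    finally show ?thesis .
  qed
  show "Var_Da a (\<lambda>A. \<Sum>i\<in>A. w i) = (?c1 - ?c2) / ?c0 * (\<Sum>i\<in>UNIV. (w i)\<^sup>2)"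
  proof -
    have "Var_Da a (\<lambda>A. \<Sum>i\<in>A. w i) = (\<Sum>A\<in>?S. \<Sum>i\<in>A. \<Sum>j\<in>A. w i * w j) / ?c0"
      unfolding Var_Da_def Cov_Da_def EY
      by (simp add: sum_product E_Da_def card_S)
    also have "\<dots> = (\<Sum>i\<in>UNIV. \<Sum>j\<in>UNIV. \<Sum>A\<in>{A\<in>{A\<in>?S. i \<in> A}. j \<in> A}. w i * w j) / ?c0"
      unfolding swap1 by (subst swapg) simp_all
    also have "\<dots> = (\<Sum>i\<in>UNIV. \<Sum>j\<in>UNIV. (if i = j then ?c1 else ?c2) * (w i * w j)) / ?c0"
    proof -
      have "{A\<in>{A\<in>?S. i \<in> A}. j \<in> A} = {A\<in>?S. i \<in> A \<and> j \<in> A}" for i j by auto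
      then show ?thesis by (simp add: card_S2 if_distrib)
    qed
    also have "\<dots> = (\<Sum>i\<in>UNIV. \<Sum>j\<in>UNIV. ?c2 * (w i * w j) + (if i = j then (?c1 - ?c2) * (w i * w j) else 0)) / ?c0"
      by (intro arg_cong[where f="\<lambda>x. x / ?c0"] sum.cong refl) (auto simp: algebra_simps)
    also have "\<dots> = (?c2 * (sum w UNIV * sum w UNIV) + (?c1 - ?c2) * (\<Sum>i\<in>UNIV. (w i)\<^sup>2)) / ?c0"
    proof -
      have e1: "(\<Sum>i\<in>UNIV. \<Sum>j\<in>UNIV. ?c2 * (w i * w j)) = ?c2 * (sum w UNIV * sum w UNIV)"
        by (simp add: sum_product sum_distrib_left sum_distrib_right mult_ac)
      have e2: "(\<Sum>i\<in>UNIV. \<Sum>j\<in>UNIV. (if i = j then (?c1 - ?c2) * (w i * w j) else 0)) = (?c1 - ?c2) * (\<Sum>i\<in>UNIV. (w i)\<^sup>2)"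
        by (simp add: sum_distrib_left power2_eq_square)
      show ?thesis by (simp only: sum.distrib e1 e2)
    qed
    also have "\<dots> = (?c1 - ?c2) / ?c0 * (\<Sum>i\<in>UNIV. (w i)\<^sup>2)" by (simp add: w0)
    finally show ?thesis .
  qed
qed



declare transpose_matrix_vector[simp del]

lemma JF_apply: fixes J :: "real^'p^'n"
  shows "(c *\<^sub>R (transpose J ** J)) *v x = c *\<^sub>R (transpose J *v (J *v x))"
  by (simp add: scaleR_matrix_vector_assoc[symmetric] matrix_vector_mul_assoc)

lemma JF_quad: fixes J :: "real^'p^'n"
  shows "x \<bullet> ((c *\<^sub>R (transpose J ** J)) *v x) = c * ((J *v x) \<bullet> (J *v x))"
  unfolding JF_apply by (simp add: adj[symmetric] inner_commute)

lemma JF_psd: fixes J :: "real^'p^'n"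
  assumes "0 \<le> c" shows "psdm (c *\<^sub>R (transpose J ** J))"
  unfolding psdm_def JF_quad using assms
  by (simp add: transpose_scalar matrix_transpose_mul)

lemma JJ_psd: fixes J :: "real^'p^'n"
  shows "psdm (J ** transpose J)"
  using JF_psd[of 1 "transpose J"] by simp

lemma JF_pos: fixes J :: "real^'p^'n"
  assumes "0 < c" "(c *\<^sub>R (transpose J ** J)) *v y \<noteq> 0"
  shows "0 < y \<bullet> ((c *\<^sub>R (transpose J ** J)) *v y)"
proof -
  have "J *v y \<noteq> 0" using assms(2) unfolding JF_apply by auto
  then show ?thesis unfolding JF_quad using assms(1) by simp
qed

lemma rp_bound: fixes J :: "real^'p^'n" and \<alpha> :: "real^'n"
  assumes Npos: "0 < N" and l: "0 < l" and Fdef: "F = (1/N) *\<^sub>R (transpose J ** J)"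
  shows "(v \<bullet> (Rm F l *v (Rm F l *v ((1/N) *\<^sub>R (transpose J *v \<alpha>)))))\<^sup>2
     \<le> (v \<bullet> (Rm F l *v (Rm F l *v (Rm F l *v (F *v v))))) * (\<alpha> \<bullet> (Rm (J ** transpose J) (N * l) *v \<alpha>))"
proof -
  have F: "psdm F" unfolding Fdef by (rule JF_psd) (use Npos in simp)
  have G: "psdm (J ** transpose J)" by (rule JJ_psd)
  have Nl: "0 < N * l" using Npos l by simp
  let ?G = "J ** transpose J + (N * l) *\<^sub>R mat 1"
  let ?H = "Rm (J ** transpose J) (N * l)"
  let ?R = "Rm F l"
  define w where "w = ?R *v (?R *v v)"
  define x where "x = (1/N) *\<^sub>R (J *v w)"
  have e1: "v \<bullet> (?R *v (?R *v ((1/N) *\<^sub>R (transpose J *v \<alpha>)))) = x \<bullet> \<alpha>"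
  proof -
    have "v \<bullet> (?R *v (?R *v ((1/N) *\<^sub>R (transpose J *v \<alpha>)))) = w \<bullet> ((1/N) *\<^sub>R (transpose J *v \<alpha>))"
      unfolding w_def using R_sym[OF F l] by metis
    also have "\<dots> = x \<bullet> \<alpha>" unfolding x_def by (simp add: adj)
    finally show ?thesis .
  qed
  have e3: "x \<bullet> \<alpha> = (?G *v x) \<bullet> (?H *v \<alpha>)"
    using M_sym[OF G, of "N * l" x "?H *v \<alpha>"] MR[OF G Nl, of \<alpha>] by simp
  have CS: "((?G *v x) \<bullet> (?H *v \<alpha>))\<^sup>2 \<le> ((?G *v x) \<bullet> (?H *v (?G *v x))) * (\<alpha> \<bullet> (?H *v \<alpha>))"
    by (rule CS_form) (use R_sym[OF G Nl] R_psd[OF G Nl] in auto)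
  have e4: "(?G *v x) \<bullet> (?H *v (?G *v x)) = (?G *v x) \<bullet> x" using RM[OF G Nl] by simp
  have e5: "(?G *v x) \<bullet> x = v \<bullet> (?R *v (?R *v (?R *v (F *v v))))"
  proof -
    have Jx: "transpose J *v x = F *v w" unfolding x_def Fdef JF_apply by (simp add: matrix_vector_mult_scaleR)
    have xx: "(N * l) * (x \<bullet> x) = l * (w \<bullet> (F *v w))"
      unfolding x_def Fdef JF_quad using Npos by (simp add: power2_eq_square field_simps)
    have "(?G *v x) \<bullet> x = x \<bullet> (?G *v x)" by (rule inner_commute)
    also have "\<dots> = x \<bullet> (J *v (transpose J *v x)) + (N * l) * (x \<bullet> x)"
      by (simp add: M_apply matrix_vector_mul_assoc inner_add_right)
    also have "x \<bullet> (J *v (transpose J *v x)) = (F *v w) \<bullet> (F *v w)"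
      using adj[of "transpose J" x "transpose J *v x"] Jx by (simp add: inner_commute)
    also note xx
    also have "(F *v w) \<bullet> (F *v w) + l * (w \<bullet> (F *v w)) = (F *v w) \<bullet> ((F + l *\<^sub>R mat 1) *v w)"
      by (simp add: M_apply inner_add_right inner_commute)
    also have "\<dots> = (F *v w) \<bullet> (?R *v v)" unfolding w_def using MR[OF F l] by simp
    also have "\<dots> = w \<bullet> (F *v (?R *v v))" by (rule psdm_sym[OF F])
    also have "\<dots> = w \<bullet> (?R *v (F *v v))" using FR_comm[OF F l] by simp
    also have "\<dots> = v \<bullet> (?R *v (?R *v (?R *v (F *v v))))" unfolding w_def using R_sym[OF F l] by metis
    finally show ?thesis .
  qed
  show ?thesis using CS e1 e3 e4 e5 by simp
qed

theorem theorem1: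
  fixes L :: "'z \<Rightarrow> real^'p \<Rightarrow> real"
    and zs :: "'n::finite \<Rightarrow> 'z"
    and \<theta>S :: "real^'p"
    and \<theta>A :: "'n set \<Rightarrow> real^'p"
    and a :: nat and z' :: 'z and lam :: real
  assumes n2: "CARD('n) \<ge> 2"
    and L_pos: "\<And>z \<theta>. L z \<theta> > 0"
    and L_diff: "\<And>z \<theta>. (\<lambda>\<theta>. L z \<theta>) differentiable (at \<theta>)"
    and stat: "(\<Sum>i\<in>UNIV. grad (L (zs i)) \<theta>S) = 0"
    and a_pos: "1 \<le> a" and a_lt: "a < CARD('n)"
    and lam: "lam > 0"
    and F_grad: "FS L zs \<theta>S *v grad (model_out L z') \<theta>S \<noteq> 0"
    and var_pos: "Var_Da a (\<lambda>A. model_out L z' (\<theta>A A)) > 0"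
    and alpha_nz: "alpha L \<theta>A a z' \<noteq> 0"
    and cond: "r_val L zs \<theta>S \<theta>A a z' lam / sqrt (o_val L zs \<theta>S \<theta>A a z' lam * tk L zs \<theta>S 1 z' lam)
               > tk L zs \<theta>S 2 z' lam / sqrt (tk L zs \<theta>S 3 z' lam * tk L zs \<theta>S 1 z' lam)"
  shows "\<exists>D. ((\<lambda>\<mu>. cp L zs \<theta>S \<theta>A a z' \<mu>) has_real_derivative D) (at lam) \<and> D > 0"
proof -
  define N where "N = real CARD('n)"
  define J where "J = Jac L zs \<theta>S"
  define F where "F = FS L zs \<theta>S"
  define v where "v = grad (model_out L z') \<theta>S"
  define X where "X = (\<lambda>A. model_out L z' (\<theta>A A))"
  define \<alpha> where "\<alpha> = alpha L \<theta>A a z'"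
  define gv where "gv = gvec L zs \<theta>S \<theta>A a z'"
  have Npos: "0 < N" using n2 by (simp add: N_def)
  have F_eq: "F = (1/N) *\<^sub>R (transpose J ** J)" unfolding F_def FS_def N_def J_def by simp
  have psdF: "psdm F" unfolding F_eq by (rule JF_psd) (use Npos in simp)
  have Jrow: "J $ i = grad (L (zs i)) \<theta>S" for i unfolding J_def Jac_def by simp
  have gv_eq: "gv = (1/N) *\<^sub>R (transpose J *v \<alpha>)" unfolding gv_def gvec_def N_def J_def \<alpha>_def by simp
  have alpha_i: "\<alpha> $ i = E_Da_cond a i X - E_Da a X" for i unfolding \<alpha>_def alpha_def X_def by simp
  define r where "r = (\<lambda>\<mu>. - (v \<bullet> (Rm F \<mu> *v gv)))"
  define t2 where "t2 = (\<lambda>\<mu>. (Rm F \<mu> *v v) \<bullet> (Rm F \<mu> *v (F *v v)))"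
  define c0 where "c0 = real (cc CARD('n) a 0)"
  define c1 where "c1 = real (cc CARD('n) a 1)"
  define c2 where "c2 = real (cc CARD('n) a 2)"
  have cpos: "c2 < c1" "0 < c0" "0 < c1" using cc_pos[OF a_pos a_lt] unfolding c0_def c1_def c2_def by auto
  define P1 where "P1 = c1 / c0"
  define P2 where "P2 = (c1 - c2) / c0"
  have P1pos: "0 < P1" and P2pos: "0 < P2" using cpos by (auto simp: P1_def P2_def)
  have VX: "0 < Var_Da a X" using var_pos by (simp add: X_def)
  define C where "C = P1 * N / (sqrt (Var_Da a X) * sqrt (P2 * N))"
  have Cpos: "0 < C" unfolding C_def using P1pos P2pos Npos VX by simp
  have Fv: "F *v v \<noteq> 0" using F_grad by (simp add: F_def v_def)
  have t2pos: "0 < t2 \<mu>" if mu: "0 < \<mu>" for \<mu>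
  proof -
    define u where "u = Rm F \<mu> *v v"
    have Fu: "F *v u \<noteq> 0" unfolding u_def using FR_comm[OF psdF mu] R_zero[OF psdF mu] Fv by metis
    have "t2 \<mu> = u \<bullet> (F *v u)" unfolding t2_def u_def using FR_comm[OF psdF mu] by simp
    also have "\<dots> > 0" using Fu unfolding F_eq by (intro JF_pos) (use Npos in auto)
    finally show ?thesis .
  qed
  have cp_eq: "cp L zs \<theta>S \<theta>A a z' \<mu> = C * (r \<mu> / sqrt (t2 \<mu>))" if mu: "0 < \<mu>" for \<mu>
  proof -
    define u where "u = Rm F \<mu> *v v"
    define w where "w = (\<lambda>i. - ((J *v u) $ i))"
    have tau_eq: "tau L zs \<theta>S \<mu> z' (zs i) = w i" for i
    proof -
      have "tau L zs \<theta>S \<mu> z' (zs i) = - (v \<bullet> (Rm F \<mu> *v (J $ i)))"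
        unfolding tau_def Rm_def F_def v_def Jrow by simp
      also have "\<dots> = - (u \<bullet> (J $ i))" unfolding u_def using R_sym[OF psdF mu] by simp
      also have "\<dots> = w i" unfolding w_def by (simp add: matrix_vector_mul_component inner_commute)
      finally show ?thesis .
    qed
    have w0: "sum w UNIV = 0"
    proof -
      have "sum w UNIV = - ((\<Sum>i\<in>UNIV. J $ i) \<bullet> u)"
        unfolding w_def by (simp add: matrix_vector_mul_component inner_sum_left sum_negf)
      also have "(\<Sum>i\<in>UNIV. J $ i) = 0" using stat by (simp add: Jrow)
      finally show ?thesis by simp
    qed
    have S1: "(\<Sum>i\<in>UNIV. w i * (E_Da_cond a i X - E_Da a X)) = N * r \<mu>"
    proof -
      have "(\<Sum>i\<in>UNIV. w i * (E_Da_cond a i X - E_Da a X)) = - ((J *v u) \<bullet> \<alpha>)"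
        unfolding w_def alpha_i[symmetric] by (simp add: inner_vec_def sum_negf)
      also have "\<dots> = - (u \<bullet> (transpose J *v \<alpha>))" by (simp add: adj)
      also have "\<dots> = - N * (u \<bullet> gv)" using Npos by (simp add: gv_eq)
      also have "\<dots> = N * r \<mu>" unfolding r_def u_def using R_sym[OF psdF mu] by simp
      finally show ?thesis .
    qed
    have S2: "(\<Sum>i\<in>UNIV. (w i)\<^sup>2) = N * t2 \<mu>"
    proof -
      have "(\<Sum>i\<in>UNIV. (w i)\<^sup>2) = (J *v u) \<bullet> (J *v u)"
        unfolding w_def by (simp add: inner_vec_def power2_eq_square)
      also have "\<dots> = N * (u \<bullet> (F *v u))" unfolding F_eq JF_quad using Npos by simp
      also have "\<dots> = N * t2 \<mu>" unfolding t2_def u_def using FR_comm[OF psdF mu] by simp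
      finally show ?thesis .
    qed
    have "cp L zs \<theta>S \<theta>A a z' \<mu> = Cov_Da a X (\<lambda>A. \<Sum>i\<in>A. w i) /
        (sqrt (Var_Da a X) * sqrt (Var_Da a (\<lambda>A. \<Sum>i\<in>A. w i)))"
      unfolding cp_def pearson_Da_def tau_eq X_def by simp
    also have "\<dots> = P1 * (N * r \<mu>) / (sqrt (Var_Da a X) * sqrt (P2 * (N * t2 \<mu>)))"
      unfolding comb_main[OF a_pos a_lt w0] S1 S2 P1_def P2_def c0_def c1_def c2_def by simp
    also have "\<dots> = C * (r \<mu> / sqrt (t2 \<mu>))"
      unfolding C_def using t2pos[OF mu] Npos P2pos VX by (simp add: real_sqrt_mult field_simps)
    finally show ?thesis .
  qed
  define R where "R = Rm F lam"
  define rp where "rp = v \<bullet> (R *v (R *v gv))"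
  define t1 where "t1 = v \<bullet> (R *v (F *v v))"
  define t3 where "t3 = v \<bullet> (R *v (R *v (R *v (F *v v))))"
  define ov0 where "ov0 = \<alpha> \<bullet> (Rm (J ** transpose J) (N * lam) *v \<alpha>)"
  have dr: "(r has_real_derivative rp) (at lam)"
    using DERIV_minus[OF d_lin[OF psdF lam, of v gv]] unfolding r_def rp_def R_def by simp
  have dt2: "(t2 has_real_derivative - (2 * t3)) (at lam)"
  proof -
    have e: "(R *v (R *v v)) \<bullet> (R *v (F *v v)) = t3" "(R *v v) \<bullet> (R *v (R *v (F *v v))) = t3"
      unfolding t3_def R_def using R_sym[OF psdF lam] by metis+
    show ?thesis using d_quad[OF psdF lam, of v "F *v v"] unfolding t2_def R_def[symmetric] e
      by simp
  qed
  have t2l: "t2 lam = v \<bullet> (R *v (R *v (F *v v)))" unfolding t2_def R_def using R_sym[OF psdF lam] by simp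
  have t2lpos: "0 < t2 lam" by (rule t2pos[OF lam])
  have t1pos: "0 < t1" unfolding t1_def R_def by (rule pos1[OF psdF lam Fv])
  have t3pos: "0 < t3"
  proof -
    have FRv: "F *v (R *v v) \<noteq> 0" unfolding R_def using FR_comm[OF psdF lam] R_zero[OF psdF lam] Fv by metis
    have "t3 = (R *v v) \<bullet> (R *v (F *v (R *v v)))"
      unfolding t3_def R_def using R_sym[OF psdF lam] FR_comm[OF psdF lam] by metis
    also have "\<dots> > 0" unfolding R_def by (rule pos1[OF psdF lam FRv[unfolded R_def]])
    finally show ?thesis .
  qed
  have opos: "0 < ov0"
  proof -
    have G: "psdm (J ** transpose J)" by (rule JJ_psd)
    have Nl: "0 < N * lam" using Npos lam by simp
    define z where "z = Rm (J ** transpose J) (N * lam) *v \<alpha>"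
    have anz: "\<alpha> \<noteq> 0" using alpha_nz by (simp add: \<alpha>_def)
    have z: "z \<noteq> 0" unfolding z_def using MR[OF G Nl, of \<alpha>] anz by auto
    have "ov0 = ((J ** transpose J + (N * lam) *\<^sub>R mat 1) *v z) \<bullet> z"
      unfolding ov0_def z_def using MR[OF G Nl, of \<alpha>] by (simp add: inner_commute)
    also have "\<dots> \<ge> (N * lam) * (z \<bullet> z)" using M_quad[OF G, where x=z and \<mu>="N * lam"] by (simp add: inner_commute)
    finally show ?thesis using z Nl by (smt (verit) inner_gt_zero_iff mult_pos_pos)
  qed
  have rpb: "rp\<^sup>2 \<le> t3 * ov0"
    using rp_bound[OF Npos lam F_eq, of v \<alpha>] unfolding rp_def t3_def ov0_def R_def gv_eq .
  have tk1: "tk L zs \<theta>S 1 z' lam = t1"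
    unfolding tk_def t1_def R_def Rm_def F_def v_def by (simp add: Let_def)
  have tk2: "tk L zs \<theta>S 2 z' lam = t2 lam"
    unfolding t2l tk_def R_def Rm_def F_def v_def by (simp add: numeral_2_eq_2 Let_def)
  have tk3: "tk L zs \<theta>S 3 z' lam = t3"
    unfolding tk_def t3_def R_def Rm_def F_def v_def by (simp add: numeral_3_eq_3 Let_def)
  have rv: "r_val L zs \<theta>S \<theta>A a z' lam = r lam"
    unfolding r_val_def r_def Rm_def F_def v_def gv_def by simp
  have ov: "o_val L zs \<theta>S \<theta>A a z' lam = ov0"
    unfolding o_val_def ov0_def Rm_def \<alpha>_def J_def N_def by simp
  have cond': "r lam / sqrt (ov0 * t1) > t2 lam / sqrt (t3 * t1)"
    using cond unfolding tk1 tk2 tk3 rv ov .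
  have key: "0 < rp * t2 lam + r lam * t3"
  proof -
    have "r lam / sqrt ov0 > t2 lam / sqrt t3"
      using cond' t1pos opos t3pos by (simp add: real_sqrt_mult divide_strict_right_mono
          field_simps)
    then have "r lam * sqrt t3 > t2 lam * sqrt ov0" using opos t3pos by (simp add: field_simps)
    then have A: "r lam * t3 > t2 lam * (sqrt ov0 * sqrt t3)"
      using t3pos by (smt (verit) mult.assoc mult.commute mult_strict_right_mono real_sqrt_gt_zero real_sqrt_mult_self)
    have "\<bar>rp\<bar> \<le> sqrt (t3 * ov0)" using rpb by (metis real_le_rsqrt real_sqrt_abs real_sqrt_le_mono)
    then have "- (sqrt ov0 * sqrt t3) \<le> rp" by (simp add: real_sqrt_mult mult.commute)
    then have "- (sqrt ov0 * sqrt t3) * t2 lam \<le> rp * t2 lam" using t2lpos by (intro mult_right_mono) auto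
    then show ?thesis using A by (simp add: algebra_simps)
  qed
  define s where "s = sqrt (t2 lam)"
  have spos: "0 < s" unfolding s_def using t2lpos by simp
  have ss: "s * s = t2 lam" unfolding s_def using t2lpos by simp
  have dsq: "((\<lambda>\<mu>. sqrt (t2 \<mu>)) has_real_derivative (inverse (sqrt (t2 lam)) / 2 * (- (2 * t3)))) (at lam)"
    by (rule DERIV_chain2[OF DERIV_real_sqrt[OF t2lpos] dt2])
  have dq: "((\<lambda>\<mu>. r \<mu> / sqrt (t2 \<mu>)) has_real_derivative
      (rp * sqrt (t2 lam) - (inverse (sqrt (t2 lam)) / 2 * (- (2 * t3))) * r lam) / (sqrt (t2 lam) ^ Suc (Suc 0))) (at lam)"
    by (rule DERIV_quotient[OF dr dsq]) (use t2lpos in simp)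
  define D where "D = C * ((rp * sqrt (t2 lam) - (inverse (sqrt (t2 lam)) / 2 * (- (2 * t3))) * r lam) / (sqrt (t2 lam) ^ Suc (Suc 0)))"
  have dh: "((\<lambda>\<mu>. C * (r \<mu> / sqrt (t2 \<mu>))) has_real_derivative D) (at lam)"
    unfolding D_def by (rule DERIV_cmult[OF dq])
  have Dpos: "0 < D"
  proof -
    have "(rp * s - (inverse s / 2 * (- (2 * t3))) * r lam) / (s ^ Suc (Suc 0)) = (rp * t2 lam + r lam * t3) / (s * t2 lam)"
      using spos ss by (simp add: field_simps power2_eq_square)
    also have "\<dots> > 0" using key spos t2lpos by simp
    finally show ?thesis unfolding D_def s_def[symmetric] using Cpos by (simp add: mult_pos_pos times_divide_eq_right[symmetric] del: times_divide_eq_right)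
  qed
  have "((\<lambda>\<mu>. cp L zs \<theta>S \<theta>A a z' \<mu>) has_real_derivative D) (at lam)"
    by (rule has_field_derivative_transform_within_open[OF dh, of "{0<..}"]) (use lam cp_eq in auto)
  then show ?thesis using Dpos by blast
qed

end
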